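(* Let $\mathcal{C}$ be a finitely complete 2-category. Every $\mathcal{F}_{\mathrm{bof}}$-quotient map in $\mathcal{C}$ is an effective $\mathcal{F}_{\mathrm{bof}}$-quotient map.
   Context: All 2-categories are strict and all limits and colimits are strict $\mathbf{Cat}$-enriched (weighted) ones; finitely complete means having all finite weighted limits. Let $\mathcal{K}_{\mathrm{bof}}$ be the 2-category generated by objects $1,2$, morphisms $u,v\colon2\to1$ and 2-cells $\alpha,\beta\colon u\Rightarrow v$. The $\mathcal{F}_{\mathrm{bof}}$-kernel of $f\colon A\to B$ is the 2-functor $\mathcal{K}_{\mathrm{bof}}\to\mathcal{C}$ sending $1\mapsto A$ and $u,v,\alpha,\beta$ to the universal data $u,v\colon\mathrm{Eq}(f)\to A$, $\alpha,\beta\colon u\Rightarrow v$ with $f\alpha=f\beta$ (a finite weighted limit). The $\mathcal{F}_{\mathrm{bof}}$-quotient of $X\colon\mathcal{K}_{\mathrm{bof}}\to\mathcal{C}$ is, when it exists, the coequifier $e\colon X1\to Q$ of $X\alpha,X\beta$, universal in the 2-categorical sense among morphisms $e$ with $e\cdot X\alpha=e\cdot X\beta$. A morphism is an $\mathcal{F}_{\mathrm{bof}}$-quotient map if it is isomorphic in the arrow 2-category $\mathcal{C}^{\mathbf 2}$ to the $\mathcal{F}_{\mathrm{bof}}$-quotient of some $X$; it is effective if its $\mathcal{F}_{\mathrm{bof}}$-kernel has an $\mathcal{F}_{\mathrm{bof}}$-quotient and the canonical comparison from that quotient to $f$ is invertible. *)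

theory Defs
  imports Main
begin

text \<open>A strict 2-category, presented with carrier sets of objects, 1-cells and 2-cells.
  cmp g f is the composite g after f (defined when cod1 f = dom1 g);
  vcmp t s is vertical composition t after s (defined when tgt2 s = src2 t);
  hcmp t s is horizontal composition, for s : f => f' : A -> B and t : g => g' : B -> C,
  giving a 2-cell (g f) => (g' f').\<close>

record ('o, 'm, 'c) two_cat =
  Ob :: "'o set"
  Mor :: "'m set"
  Cell :: "'c set"
  dom1 :: "'m \<Rightarrow> 'o"
  cod1 :: "'m \<Rightarrow> 'o"
  src2 :: "'c \<Rightarrow> 'm"
  tgt2 :: "'c \<Rightarrow> 'm"
  cmp :: "'m \<Rightarrow> 'm \<Rightarrow> 'm"
  idm :: "'o \<Rightarrow> 'm"
  vcmp :: "'c \<Rightarrow> 'c \<Rightarrow> 'c"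
  hcmp :: "'c \<Rightarrow> 'c \<Rightarrow> 'c"
  id2 :: "'m \<Rightarrow> 'c"

definition hom :: "('o, 'm, 'c, 'x) two_cat_scheme \<Rightarrow> 'o \<Rightarrow> 'o \<Rightarrow> 'm set" where
  "hom C A B = {f \<in> Mor C. dom1 C f = A \<and> cod1 C f = B}"

definition cells :: "('o, 'm, 'c, 'x) two_cat_scheme \<Rightarrow> 'm \<Rightarrow> 'm \<Rightarrow> 'c set" where
  "cells C f g = {s \<in> Cell C. src2 C s = f \<and> tgt2 C s = g}"

definition two_category :: "('o, 'm, 'c, 'x) two_cat_scheme \<Rightarrow> bool" where
  "two_category C \<longleftrightarrow>
    \<comment> \<open>objects and 1-cells form a category\<close>
    (\<forall>f \<in> Mor C. dom1 C f \<in> Ob C \<and> cod1 C f \<in> Ob C) \<and>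
    (\<forall>A \<in> Ob C. idm C A \<in> hom C A A) \<and>
    (\<forall>f \<in> Mor C. \<forall>g \<in> Mor C. cod1 C f = dom1 C g \<longrightarrow>
        cmp C g f \<in> hom C (dom1 C f) (cod1 C g)) \<and>
    (\<forall>f \<in> Mor C. cmp C (idm C (cod1 C f)) f = f \<and> cmp C f (idm C (dom1 C f)) = f) \<and>
    (\<forall>f \<in> Mor C. \<forall>g \<in> Mor C. \<forall>h \<in> Mor C. cod1 C f = dom1 C g \<and> cod1 C g = dom1 C h \<longrightarrow>
        cmp C h (cmp C g f) = cmp C (cmp C h g) f) \<and>
    \<comment> \<open>2-cells go between parallel 1-cells\<close>
    (\<forall>s \<in> Cell C. src2 C s \<in> Mor C \<and> tgt2 C s \<in> Mor C \<and>
        dom1 C (src2 C s) = dom1 C (tgt2 C s) \<and> cod1 C (src2 C s) = cod1 C (tgt2 C s)) \<and>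
    \<comment> \<open>vertical composition: each hom forms a category\<close>
    (\<forall>f \<in> Mor C. id2 C f \<in> cells C f f) \<and>
    (\<forall>s \<in> Cell C. \<forall>t \<in> Cell C. tgt2 C s = src2 C t \<longrightarrow>
        vcmp C t s \<in> cells C (src2 C s) (tgt2 C t)) \<and>
    (\<forall>s \<in> Cell C. vcmp C (id2 C (tgt2 C s)) s = s \<and> vcmp C s (id2 C (src2 C s)) = s) \<and>
    (\<forall>s \<in> Cell C. \<forall>t \<in> Cell C. \<forall>u \<in> Cell C. tgt2 C s = src2 C t \<and> tgt2 C t = src2 C u \<longrightarrow>
        vcmp C u (vcmp C t s) = vcmp C (vcmp C u t) s) \<and>
    \<comment> \<open>horizontal composition\<close>
    (\<forall>s \<in> Cell C. \<forall>t \<in> Cell C. cod1 C (src2 C s) = dom1 C (src2 C t) \<longrightarrow>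
        hcmp C t s \<in> cells C (cmp C (src2 C t) (src2 C s)) (cmp C (tgt2 C t) (tgt2 C s))) \<and>
    (\<forall>s \<in> Cell C. \<forall>t \<in> Cell C. \<forall>u \<in> Cell C.
        cod1 C (src2 C s) = dom1 C (src2 C t) \<and> cod1 C (src2 C t) = dom1 C (src2 C u) \<longrightarrow>
        hcmp C u (hcmp C t s) = hcmp C (hcmp C u t) s) \<and>
    (\<forall>s \<in> Cell C. hcmp C (id2 C (idm C (cod1 C (src2 C s)))) s = s \<and>
        hcmp C s (id2 C (idm C (dom1 C (src2 C s)))) = s) \<and>
    (\<forall>f \<in> Mor C. \<forall>g \<in> Mor C. cod1 C f = dom1 C g \<longrightarrow>
        hcmp C (id2 C g) (id2 C f) = id2 C (cmp C g f)) \<and>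
    \<comment> \<open>interchange law\<close>
    (\<forall>s \<in> Cell C. \<forall>s' \<in> Cell C. \<forall>t \<in> Cell C. \<forall>t' \<in> Cell C.
        tgt2 C s = src2 C s' \<and> tgt2 C t = src2 C t' \<and> cod1 C (src2 C s) = dom1 C (src2 C t) \<longrightarrow>
        hcmp C (vcmp C t' t) (vcmp C s' s) = vcmp C (hcmp C t' s') (hcmp C t s))"

definition lwh :: "('o, 'm, 'c, 'x) two_cat_scheme \<Rightarrow> 'm \<Rightarrow> 'c \<Rightarrow> 'c" where
  "lwh C f s = hcmp C (id2 C f) s"

definition rwh :: "('o, 'm, 'c, 'x) two_cat_scheme \<Rightarrow> 'c \<Rightarrow> 'm \<Rightarrow> 'c" where
  "rwh C s f = hcmp C s (id2 C f)"

definition iso1 :: "('o, 'm, 'c, 'x) two_cat_scheme \<Rightarrow> 'm \<Rightarrow> bool" where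
  "iso1 C f \<longleftrightarrow> f \<in> Mor C \<and> (\<exists>g \<in> hom C (cod1 C f) (dom1 C f).
      cmp C g f = idm C (dom1 C f) \<and> cmp C f g = idm C (cod1 C f))"

definition is_terminal :: "('o, 'm, 'c, 'x) two_cat_scheme \<Rightarrow> 'o \<Rightarrow> bool" where
  "is_terminal C T \<longleftrightarrow> T \<in> Ob C \<and>
    (\<forall>Y \<in> Ob C. (\<exists>!t. t \<in> hom C Y T) \<and>
       (\<forall>t \<in> hom C Y T. \<forall>t' \<in> hom C Y T. \<exists>!r. r \<in> cells C t t'))"

definition is_product :: "('o, 'm, 'c, 'x) two_cat_scheme \<Rightarrow> 'o \<Rightarrow> 'o \<Rightarrow> 'o \<Rightarrow> 'm \<Rightarrow> 'm \<Rightarrow> bool" where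
  "is_product C A B P p q \<longleftrightarrow> P \<in> Ob C \<and> p \<in> hom C P A \<and> q \<in> hom C P B \<and>
    (\<forall>Y \<in> Ob C. \<forall>x \<in> hom C Y A. \<forall>y \<in> hom C Y B.
       \<exists>!z. z \<in> hom C Y P \<and> cmp C p z = x \<and> cmp C q z = y) \<and>
    (\<forall>Y \<in> Ob C. \<forall>z \<in> hom C Y P. \<forall>z' \<in> hom C Y P.
       \<forall>s \<in> cells C (cmp C p z) (cmp C p z'). \<forall>t \<in> cells C (cmp C q z) (cmp C q z').
       \<exists>!r. r \<in> cells C z z' \<and> lwh C p r = s \<and> lwh C q r = t)"

definition is_equalizer :: "('o, 'm, 'c, 'x) two_cat_scheme \<Rightarrow> 'm \<Rightarrow> 'm \<Rightarrow> 'o \<Rightarrow> 'm \<Rightarrow> bool" where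
  "is_equalizer C f g E m \<longleftrightarrow> E \<in> Ob C \<and> m \<in> hom C E (dom1 C f) \<and> cmp C f m = cmp C g m \<and>
    (\<forall>Y \<in> Ob C. \<forall>x \<in> hom C Y (dom1 C f). cmp C f x = cmp C g x \<longrightarrow>
       (\<exists>!z. z \<in> hom C Y E \<and> cmp C m z = x)) \<and>
    (\<forall>Y \<in> Ob C. \<forall>z \<in> hom C Y E. \<forall>z' \<in> hom C Y E.
       \<forall>s \<in> cells C (cmp C m z) (cmp C m z'). lwh C f s = lwh C g s \<longrightarrow>
       (\<exists>!r. r \<in> cells C z z' \<and> lwh C m r = s))"

text \<open>Cotensor of an object with the arrow category 2 (arrow object).\<close>
definition is_arrow_object :: "('o, 'm, 'c, 'x) two_cat_scheme \<Rightarrow> 'o \<Rightarrow> 'o \<Rightarrow> 'm \<Rightarrow> 'm \<Rightarrow> 'c \<Rightarrow> bool" where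
  "is_arrow_object C A P d0 d1 l \<longleftrightarrow> P \<in> Ob C \<and> d0 \<in> hom C P A \<and> d1 \<in> hom C P A \<and>
    l \<in> cells C d0 d1 \<and>
    (\<forall>Y \<in> Ob C. \<forall>x \<in> hom C Y A. \<forall>y \<in> hom C Y A. \<forall>g \<in> cells C x y.
       \<exists>!z. z \<in> hom C Y P \<and> cmp C d0 z = x \<and> cmp C d1 z = y \<and> rwh C l z = g) \<and>
    (\<forall>Y \<in> Ob C. \<forall>z \<in> hom C Y P. \<forall>z' \<in> hom C Y P.
       \<forall>s \<in> cells C (cmp C d0 z) (cmp C d0 z'). \<forall>t \<in> cells C (cmp C d1 z) (cmp C d1 z').
       vcmp C (rwh C l z') s = vcmp C t (rwh C l z) \<longrightarrow>
       (\<exists>!r. r \<in> cells C z z' \<and> lwh C d0 r = s \<and> lwh C d1 r = t))"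

text \<open>A 2-category has all finite weighted limits iff it has a terminal object, binary products,
  equalizers and cotensors with the arrow category 2 (Street 1976; Kelly).\<close>
definition finitely_complete :: "('o, 'm, 'c, 'x) two_cat_scheme \<Rightarrow> bool" where
  "finitely_complete C \<longleftrightarrow>
    (\<exists>T. is_terminal C T) \<and>
    (\<forall>A \<in> Ob C. \<forall>B \<in> Ob C. \<exists>P p q. is_product C A B P p q) \<and>
    (\<forall>f \<in> Mor C. \<forall>g \<in> Mor C. dom1 C f = dom1 C g \<and> cod1 C f = cod1 C g \<longrightarrow>
        (\<exists>E m. is_equalizer C f g E m)) \<and>
    (\<forall>A \<in> Ob C. \<exists>P d0 d1 l. is_arrow_object C A P d0 d1 l)"

text \<open>A 2-functor X from K_bof is exactly the data X2, X1, Xu, Xv : X2 -> X1, Xalpha, Xbeta : Xu => Xv.\<close>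
definition bof_diagram :: "('o, 'm, 'c, 'x) two_cat_scheme \<Rightarrow> 'o \<Rightarrow> 'o \<Rightarrow> 'm \<Rightarrow> 'm \<Rightarrow> 'c \<Rightarrow> 'c \<Rightarrow> bool" where
  "bof_diagram C X2 X1 u v a b \<longleftrightarrow> X2 \<in> Ob C \<and> X1 \<in> Ob C \<and>
    u \<in> hom C X2 X1 \<and> v \<in> hom C X2 X1 \<and> a \<in> cells C u v \<and> b \<in> cells C u v"

definition is_coequifier :: "('o, 'm, 'c, 'x) two_cat_scheme \<Rightarrow> 'c \<Rightarrow> 'c \<Rightarrow> 'o \<Rightarrow> 'm \<Rightarrow> bool" where
  "is_coequifier C a b Q e \<longleftrightarrow>
    a \<in> Cell C \<and> b \<in> Cell C \<and> src2 C a = src2 C b \<and> tgt2 C a = tgt2 C b \<and>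
    Q \<in> Ob C \<and> e \<in> hom C (cod1 C (src2 C a)) Q \<and> lwh C e a = lwh C e b \<and>
    (\<forall>Y \<in> Ob C. \<forall>g \<in> hom C (cod1 C (src2 C a)) Y. lwh C g a = lwh C g b \<longrightarrow>
       (\<exists>!h. h \<in> hom C Q Y \<and> cmp C h e = g)) \<and>
    (\<forall>Y \<in> Ob C. \<forall>h \<in> hom C Q Y. \<forall>h' \<in> hom C Q Y. \<forall>t \<in> cells C (cmp C h e) (cmp C h' e).
       \<exists>!p. p \<in> cells C h h' \<and> rwh C p e = t)"

text \<open>Isomorphism in the arrow 2-category C^2 (1-cells are strictly commuting squares).\<close>
definition arrow_iso :: "('o, 'm, 'c, 'x) two_cat_scheme \<Rightarrow> 'm \<Rightarrow> 'm \<Rightarrow> bool" where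
  "arrow_iso C f e \<longleftrightarrow> f \<in> Mor C \<and> e \<in> Mor C \<and>
    (\<exists>x \<in> hom C (dom1 C f) (dom1 C e). \<exists>y \<in> hom C (cod1 C f) (cod1 C e).
       iso1 C x \<and> iso1 C y \<and> cmp C e x = cmp C y f)"

definition bof_quotient_map :: "('o, 'm, 'c, 'x) two_cat_scheme \<Rightarrow> 'm \<Rightarrow> bool" where
  "bof_quotient_map C f \<longleftrightarrow> f \<in> Mor C \<and>
    (\<exists>X2 X1 u v a b Q e. bof_diagram C X2 X1 u v a b \<and> is_coequifier C a b Q e \<and> arrow_iso C f e)"

definition is_bof_kernel :: "('o, 'm, 'c, 'x) two_cat_scheme \<Rightarrow> 'm \<Rightarrow> 'o \<Rightarrow> 'm \<Rightarrow> 'm \<Rightarrow> 'c \<Rightarrow> 'c \<Rightarrow> bool" where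
  "is_bof_kernel C f E u v a b \<longleftrightarrow> f \<in> Mor C \<and> E \<in> Ob C \<and>
    u \<in> hom C E (dom1 C f) \<and> v \<in> hom C E (dom1 C f) \<and> a \<in> cells C u v \<and> b \<in> cells C u v \<and>
    lwh C f a = lwh C f b \<and>
    (\<forall>Y \<in> Ob C. \<forall>x \<in> hom C Y (dom1 C f). \<forall>y \<in> hom C Y (dom1 C f).
       \<forall>g \<in> cells C x y. \<forall>d \<in> cells C x y. lwh C f g = lwh C f d \<longrightarrow>
       (\<exists>!z. z \<in> hom C Y E \<and> cmp C u z = x \<and> cmp C v z = y \<and> rwh C a z = g \<and> rwh C b z = d)) \<and>
    (\<forall>Y \<in> Ob C. \<forall>z \<in> hom C Y E. \<forall>z' \<in> hom C Y E.
       \<forall>s \<in> cells C (cmp C u z) (cmp C u z'). \<forall>t \<in> cells C (cmp C v z) (cmp C v z').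
       vcmp C (rwh C a z') s = vcmp C t (rwh C a z) \<and> vcmp C (rwh C b z') s = vcmp C t (rwh C b z) \<longrightarrow>
       (\<exists>!r. r \<in> cells C z z' \<and> lwh C u r = s \<and> lwh C v r = t))"

definition effective_bof_quotient_map :: "('o, 'm, 'c, 'x) two_cat_scheme \<Rightarrow> 'm \<Rightarrow> bool" where
  "effective_bof_quotient_map C f \<longleftrightarrow> f \<in> Mor C \<and>
    (\<exists>E u v a b. is_bof_kernel C f E u v a b \<and>
      (\<exists>Q e. is_coequifier C a b Q e \<and>
        (\<exists>h \<in> hom C Q (cod1 C f). cmp C h e = f \<and> iso1 C h)))"

end

theory Submission
  imports Defs
begin


locale tc =
  fixes C :: "('o,'m,'c) two_cat"
  assumes tc: "two_category C"
begin

lemma homD: assumes "f \<in> hom C A B" shows "f \<in> Mor C" "dom1 C f = A" "cod1 C f = B"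
  using assms by (auto simp: hom_def)

lemma homI: "f \<in> Mor C \<Longrightarrow> f \<in> hom C (dom1 C f) (cod1 C f)"
  by (auto simp: hom_def)

lemma hom_ob: assumes "f \<in> hom C A B" shows "A \<in> Ob C" "B \<in> Ob C"
  using assms tc unfolding two_category_def hom_def by auto

lemma cmp_hom: "f \<in> hom C A B \<Longrightarrow> g \<in> hom C B D \<Longrightarrow> cmp C g f \<in> hom C A D"
  using tc unfolding two_category_def hom_def by auto

lemma idm_hom: "A \<in> Ob C \<Longrightarrow> idm C A \<in> hom C A A"
  using tc unfolding two_category_def by auto

lemma cmp_idl: "f \<in> hom C A B \<Longrightarrow> cmp C (idm C B) f = f"
  using tc unfolding two_category_def hom_def by auto

lemma cmp_idr: "f \<in> hom C A B \<Longrightarrow> cmp C f (idm C A) = f"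
  using tc unfolding two_category_def hom_def by auto

lemma cmp_assoc: "f \<in> hom C A B \<Longrightarrow> g \<in> hom C B D \<Longrightarrow> h \<in> hom C D E \<Longrightarrow>
   cmp C h (cmp C g f) = cmp C (cmp C h g) f"
  using tc unfolding two_category_def hom_def by auto

lemma cellsD: assumes "s \<in> cells C f g" shows "s \<in> Cell C" "src2 C s = f" "tgt2 C s = g"
  using assms by (auto simp: cells_def)

lemma cells_par: assumes "s \<in> cells C f g" "f \<in> hom C A B" shows "g \<in> hom C A B"
  using assms tc unfolding two_category_def hom_def cells_def by auto

lemma cells_par': assumes "s \<in> cells C f g" "g \<in> hom C A B" shows "f \<in> hom C A B"
  using assms tc unfolding two_category_def hom_def cells_def by auto

lemma cells_mor: assumes "s \<in> cells C f g" shows "f \<in> Mor C" "g \<in> Mor C"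
  using assms tc unfolding two_category_def hom_def cells_def by auto

lemma id2_cells: "f \<in> Mor C \<Longrightarrow> id2 C f \<in> cells C f f"
  using tc unfolding two_category_def by auto

lemma vcmp_cells: "s \<in> cells C f g \<Longrightarrow> t \<in> cells C g h \<Longrightarrow> vcmp C t s \<in> cells C f h"
  using tc unfolding two_category_def cells_def by auto

lemma vcmp_idl: "s \<in> cells C f g \<Longrightarrow> vcmp C (id2 C g) s = s"
  using tc unfolding two_category_def cells_def by auto

lemma vcmp_idr: "s \<in> cells C f g \<Longrightarrow> vcmp C s (id2 C f) = s"
  using tc unfolding two_category_def cells_def by auto

lemma hcmp_cells: "s \<in> cells C f f' \<Longrightarrow> t \<in> cells C g g' \<Longrightarrow> f \<in> hom C A B \<Longrightarrow> g \<in> hom C B D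
   \<Longrightarrow> hcmp C t s \<in> cells C (cmp C g f) (cmp C g' f')"
  using tc unfolding two_category_def cells_def hom_def by auto

lemma hcmp_assoc: "s \<in> cells C f f' \<Longrightarrow> t \<in> cells C g g' \<Longrightarrow> u \<in> cells C h h' \<Longrightarrow>
   f \<in> hom C A B \<Longrightarrow> g \<in> hom C B D \<Longrightarrow> h \<in> hom C D E \<Longrightarrow>
   hcmp C u (hcmp C t s) = hcmp C (hcmp C u t) s"
  using tc unfolding two_category_def cells_def hom_def by auto

lemma hcmp_id2: "f \<in> hom C A B \<Longrightarrow> g \<in> hom C B D \<Longrightarrow> hcmp C (id2 C g) (id2 C f) = id2 C (cmp C g f)"
  using tc unfolding two_category_def cells_def hom_def by auto

lemma interchange: "s \<in> cells C f f' \<Longrightarrow> s' \<in> cells C f' f'' \<Longrightarrow> t \<in> cells C g g' \<Longrightarrow> t' \<in> cells C g' g''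
   \<Longrightarrow> f \<in> hom C A B \<Longrightarrow> g \<in> hom C B D \<Longrightarrow>
   hcmp C (vcmp C t' t) (vcmp C s' s) = vcmp C (hcmp C t' s') (hcmp C t s)"
  using tc unfolding two_category_def cells_def hom_def by auto

lemma id2_hom: "f \<in> hom C A B \<Longrightarrow> id2 C f \<in> cells C f f"
  by (rule id2_cells) (rule homD)

lemma lwh_cells: "s \<in> cells C f f' \<Longrightarrow> f \<in> hom C A B \<Longrightarrow> h \<in> hom C B D \<Longrightarrow>
   lwh C h s \<in> cells C (cmp C h f) (cmp C h f')"
  unfolding lwh_def by (rule hcmp_cells) (auto intro: id2_hom)

lemma rwh_cells: "s \<in> cells C f f' \<Longrightarrow> f \<in> hom C A B \<Longrightarrow> z \<in> hom C Y A \<Longrightarrow>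
   rwh C s z \<in> cells C (cmp C f z) (cmp C f' z)"
  unfolding rwh_def by (rule hcmp_cells) (auto intro: id2_hom)

lemma lwh_lwh: "s \<in> cells C f f' \<Longrightarrow> f \<in> hom C A B \<Longrightarrow> h \<in> hom C B D \<Longrightarrow> g \<in> hom C D E \<Longrightarrow>
   lwh C g (lwh C h s) = lwh C (cmp C g h) s"
  unfolding lwh_def
  by (subst hcmp_assoc[where A=A and B=B and D=D and E=E]) (auto intro: id2_hom simp: hcmp_id2)

lemma rwh_rwh: "s \<in> cells C f f' \<Longrightarrow> f \<in> hom C A B \<Longrightarrow> z \<in> hom C Y A \<Longrightarrow> z' \<in> hom C X Y \<Longrightarrow>
   rwh C (rwh C s z) z' = rwh C s (cmp C z z')"
  unfolding rwh_def
  by (subst hcmp_id2[symmetric], assumption, assumption,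
      subst hcmp_assoc[where A=X and B=Y and D=A and E=B]) (auto intro: id2_hom)

lemma lwh_rwh: "s \<in> cells C f f' \<Longrightarrow> f \<in> hom C A B \<Longrightarrow> z \<in> hom C Y A \<Longrightarrow> h \<in> hom C B D \<Longrightarrow>
   lwh C h (rwh C s z) = rwh C (lwh C h s) z"
  unfolding rwh_def lwh_def
  by (subst hcmp_assoc[where A=Y and B=A and D=B and E=D]) (auto intro: id2_hom)

lemma lwh_idm: "s \<in> cells C f f' \<Longrightarrow> f \<in> hom C A B \<Longrightarrow> lwh C (idm C B) s = s"
  unfolding lwh_def using tc unfolding two_category_def cells_def hom_def by auto

lemma rwh_idm: "s \<in> cells C f f' \<Longrightarrow> f \<in> hom C A B \<Longrightarrow> rwh C s (idm C A) = s"
  unfolding rwh_def using tc unfolding two_category_def cells_def hom_def by auto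

lemma lwh_id2: "f \<in> hom C A B \<Longrightarrow> h \<in> hom C B D \<Longrightarrow> lwh C h (id2 C f) = id2 C (cmp C h f)"
  unfolding lwh_def by (rule hcmp_id2)

lemma rwh_id2: "f \<in> hom C A B \<Longrightarrow> z \<in> hom C Y A \<Longrightarrow> rwh C (id2 C f) z = id2 C (cmp C f z)"
  unfolding rwh_def by (rule hcmp_id2)

lemma lwh_vcmp: "s \<in> cells C f g \<Longrightarrow> t \<in> cells C g k \<Longrightarrow> f \<in> hom C A B \<Longrightarrow> h \<in> hom C B D \<Longrightarrow>
   lwh C h (vcmp C t s) = vcmp C (lwh C h t) (lwh C h s)"
proof -
  assume a: "s \<in> cells C f g" "t \<in> cells C g k" "f \<in> hom C A B" "h \<in> hom C B D"
  have "id2 C h = vcmp C (id2 C h) (id2 C h)" using vcmp_idl[OF id2_hom[OF a(4)]] by simp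
  hence "lwh C h (vcmp C t s) = hcmp C (vcmp C (id2 C h) (id2 C h)) (vcmp C t s)"
    unfolding lwh_def by simp
  also have "\<dots> = vcmp C (lwh C h t) (lwh C h s)" unfolding lwh_def
    by (rule interchange[OF a(1,2) id2_hom[OF a(4)] id2_hom[OF a(4)] a(3,4)])
  finally show ?thesis .
qed

lemma rwh_vcmp: "s \<in> cells C f g \<Longrightarrow> t \<in> cells C g k \<Longrightarrow> f \<in> hom C A B \<Longrightarrow> z \<in> hom C Y A \<Longrightarrow>
   rwh C (vcmp C t s) z = vcmp C (rwh C t z) (rwh C s z)"
proof -
  assume a: "s \<in> cells C f g" "t \<in> cells C g k" "f \<in> hom C A B" "z \<in> hom C Y A"
  have "id2 C z = vcmp C (id2 C z) (id2 C z)" using vcmp_idl[OF id2_hom[OF a(4)]] by simp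
  hence "rwh C (vcmp C t s) z = hcmp C (vcmp C t s) (vcmp C (id2 C z) (id2 C z))"
    unfolding rwh_def by simp
  also have "\<dots> = vcmp C (rwh C t z) (rwh C s z)" unfolding rwh_def
    by (rule interchange[OF id2_hom[OF a(4)] id2_hom[OF a(4)] a(1,2) a(4,3)])
  finally show ?thesis .
qed

lemma naturality: "\<sigma> \<in> cells C h h' \<Longrightarrow> h \<in> hom C A B \<Longrightarrow> r \<in> cells C z z' \<Longrightarrow> z \<in> hom C Y A \<Longrightarrow>
   vcmp C (rwh C \<sigma> z') (lwh C h r) = vcmp C (lwh C h' r) (rwh C \<sigma> z)"
proof -
  assume a: "\<sigma> \<in> cells C h h'" "h \<in> hom C A B" "r \<in> cells C z z'" "z \<in> hom C Y A"
  have h': "h' \<in> hom C A B" using cells_par a by blast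
  have z': "z' \<in> hom C Y A" using cells_par a by blast
  have "hcmp C \<sigma> r = hcmp C (vcmp C \<sigma> (id2 C h)) (vcmp C (id2 C z') r)"
    using vcmp_idr[OF a(1)] vcmp_idl[OF a(3)] by simp
  also have "\<dots> = vcmp C (rwh C \<sigma> z') (lwh C h r)" unfolding rwh_def lwh_def
    by (rule interchange[OF a(3) id2_hom[OF z'] id2_hom[OF a(2)] a(1) a(4) a(2)])
  finally have 1: "hcmp C \<sigma> r = vcmp C (rwh C \<sigma> z') (lwh C h r)" .
  have "hcmp C \<sigma> r = hcmp C (vcmp C (id2 C h') \<sigma>) (vcmp C r (id2 C z))"
    using vcmp_idl[OF a(1)] vcmp_idr[OF a(3)] by simp
  also have "\<dots> = vcmp C (lwh C h' r) (rwh C \<sigma> z)" unfolding rwh_def lwh_def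
    by (rule interchange[OF id2_hom[OF a(4)] a(3) a(1) id2_hom[OF h'] a(4) a(2)])
  finally show ?thesis using 1 by simp
qed

end


context tc begin

lemma ex1_uniq: "\<exists>!x. P x \<Longrightarrow> P a \<Longrightarrow> P b \<Longrightarrow> a = b" by blast

lemma eqU1: "is_equalizer C f g E m \<Longrightarrow> Y \<in> Ob C \<Longrightarrow> x \<in> hom C Y (dom1 C f) \<Longrightarrow> cmp C f x = cmp C g x \<Longrightarrow> \<exists>!z. z \<in> hom C Y E \<and> cmp C m z = x"
  unfolding is_equalizer_def by blast
lemma eqU2: "is_equalizer C f g E m \<Longrightarrow> Y \<in> Ob C \<Longrightarrow> z \<in> hom C Y E \<Longrightarrow> z' \<in> hom C Y E \<Longrightarrow>
       s \<in> cells C (cmp C m z) (cmp C m z') \<Longrightarrow> lwh C f s = lwh C g s \<Longrightarrow>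
       (\<exists>!r. r \<in> cells C z z' \<and> lwh C m r = s)"
  unfolding is_equalizer_def by blast

lemma eq_basic: assumes "is_equalizer C f g E m" "f \<in> hom C A B"
  shows "m \<in> hom C E A" "cmp C f m = cmp C g m" "E \<in> Ob C"
proof -
  have "m \<in> hom C E (dom1 C f)" "cmp C f m = cmp C g m" "E \<in> Ob C"
    using assms(1) unfolding is_equalizer_def by - (elim conjE, assumption)+
  thus "m \<in> hom C E A" "cmp C f m = cmp C g m" "E \<in> Ob C" using homD(2)[OF assms(2)] by simp_all
qed

lemma eq_fac: assumes "is_equalizer C f g E m" "f \<in> hom C A B" "x \<in> hom C Y A" "cmp C f x = cmp C g x"
  obtains z where "z \<in> hom C Y E" "cmp C m z = x"
proof -
  have "x \<in> hom C Y (dom1 C f)" using assms homD by simp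
  thus ?thesis using eqU1[OF assms(1) hom_ob(1)[OF assms(3)] _ assms(4)] that by blast
qed

lemma eq_cancel: assumes "is_equalizer C f g E m" "f \<in> hom C A B" "g \<in> hom C A B"
   "z \<in> hom C Y E" "z' \<in> hom C Y E" "cmp C m z = cmp C m z'"
  shows "z = z'"
proof -
  note b = eq_basic[OF assms(1,2)]
  have x: "cmp C m z \<in> hom C Y (dom1 C f)" using cmp_hom[OF assms(4) b(1)] homD(2)[OF assms(2)] by simp
  have "cmp C f (cmp C m z) = cmp C g (cmp C m z)"
    using cmp_assoc[OF assms(4) b(1) assms(2)] cmp_assoc[OF assms(4) b(1) assms(3)] b(2) by simp
  from eqU1[OF assms(1) hom_ob(1)[OF assms(4)] x this] show ?thesis by (rule ex1_uniq) (use assms in simp_all)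
qed

lemma eq_fac2: assumes "is_equalizer C f g E m" "z \<in> hom C Y E" "z' \<in> hom C Y E"
   "s \<in> cells C (cmp C m z) (cmp C m z')" "lwh C f s = lwh C g s"
  obtains r where "r \<in> cells C z z'" "lwh C m r = s"
  using eqU2[OF assms(1) hom_ob(1)[OF assms(2)] assms(2-5)] that by blast

lemma eq_cancel2: assumes "is_equalizer C f g E m" "f \<in> hom C A B" "g \<in> hom C A B"
   "z \<in> hom C Y E" "r \<in> cells C z z'" "r' \<in> cells C z z'" "lwh C m r = lwh C m r'"
  shows "r = r'"
proof -
  note b = eq_basic[OF assms(1,2)]
  have z': "z' \<in> hom C Y E" using cells_par assms(4,5) by blast
  have s: "lwh C m r \<in> cells C (cmp C m z) (cmp C m z')" using lwh_cells[OF assms(5,4) b(1)] .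
  have "lwh C f (lwh C m r) = lwh C g (lwh C m r)"
    using lwh_lwh[OF assms(5,4) b(1) assms(2)] lwh_lwh[OF assms(5,4) b(1) assms(3)] b(2) by simp
  from eqU2[OF assms(1) hom_ob(1)[OF assms(4)] assms(4) z' s this] show ?thesis by (rule ex1_uniq) (use assms in simp_all)
qed

lemma prU1: "is_product C A B P p q \<Longrightarrow> Y \<in> Ob C \<Longrightarrow> x \<in> hom C Y A \<Longrightarrow> y \<in> hom C Y B \<Longrightarrow>
       \<exists>!z. z \<in> hom C Y P \<and> cmp C p z = x \<and> cmp C q z = y"
  unfolding is_product_def by blast
lemma prU2: "is_product C A B P p q \<Longrightarrow> Y \<in> Ob C \<Longrightarrow> z \<in> hom C Y P \<Longrightarrow> z' \<in> hom C Y P \<Longrightarrow>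
       s \<in> cells C (cmp C p z) (cmp C p z') \<Longrightarrow> t \<in> cells C (cmp C q z) (cmp C q z') \<Longrightarrow>
       \<exists>!r. r \<in> cells C z z' \<and> lwh C p r = s \<and> lwh C q r = t"
  unfolding is_product_def by blast

lemma prod_basic: assumes "is_product C A B P p q"
  shows "p \<in> hom C P A" "q \<in> hom C P B" "P \<in> Ob C"
  using assms unfolding is_product_def by - (elim conjE, assumption)+

lemma prod_pair: assumes "is_product C A B P p q" "x \<in> hom C Y A" "y \<in> hom C Y B"
  obtains z where "z \<in> hom C Y P" "cmp C p z = x" "cmp C q z = y"
  using prU1[OF assms(1) hom_ob(1)[OF assms(2)] assms(2,3)] that by blast

lemma prod_cancel: assumes "is_product C A B P p q"
   "z \<in> hom C Y P" "z' \<in> hom C Y P" "cmp C p z = cmp C p z'" "cmp C q z = cmp C q z'"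
  shows "z = z'"
proof -
  note b = prod_basic[OF assms(1)]
  have "cmp C p z \<in> hom C Y A" "cmp C q z \<in> hom C Y B" using cmp_hom[OF assms(2)] b by blast+
  from prU1[OF assms(1) hom_ob(1)[OF assms(2)] this] show ?thesis by (rule ex1_uniq) (use assms in simp_all)
qed

lemma prod_pair2: assumes "is_product C A B P p q" "z \<in> hom C Y P" "z' \<in> hom C Y P"
   "s \<in> cells C (cmp C p z) (cmp C p z')" "t \<in> cells C (cmp C q z) (cmp C q z')"
  obtains r where "r \<in> cells C z z'" "lwh C p r = s" "lwh C q r = t"
  using prU2[OF assms(1) hom_ob(1)[OF assms(2)] assms(2-5)] that by blast

lemma prod_cancel2: assumes "is_product C A B P p q"
   "z \<in> hom C Y P" "r \<in> cells C z z'" "r' \<in> cells C z z'" "lwh C p r = lwh C p r'" "lwh C q r = lwh C q r'"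
  shows "r = r'"
proof -
  note b = prod_basic[OF assms(1)]
  have z': "z' \<in> hom C Y P" using cells_par assms(2,3) by blast
  have "lwh C p r \<in> cells C (cmp C p z) (cmp C p z')" "lwh C q r \<in> cells C (cmp C q z) (cmp C q z')"
    using lwh_cells[OF assms(3,2)] b by blast+
  from prU2[OF assms(1) hom_ob(1)[OF assms(2)] assms(2) z' this] show ?thesis by (rule ex1_uniq) (use assms in simp_all)
qed

lemma arU1: "is_arrow_object C A P d0 d1 l \<Longrightarrow> Y \<in> Ob C \<Longrightarrow> x \<in> hom C Y A \<Longrightarrow> y \<in> hom C Y A \<Longrightarrow> g \<in> cells C x y \<Longrightarrow>
       \<exists>!z. z \<in> hom C Y P \<and> cmp C d0 z = x \<and> cmp C d1 z = y \<and> rwh C l z = g"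
  unfolding is_arrow_object_def by blast
lemma arU2: "is_arrow_object C A P d0 d1 l \<Longrightarrow> Y \<in> Ob C \<Longrightarrow> z \<in> hom C Y P \<Longrightarrow> z' \<in> hom C Y P \<Longrightarrow>
       s \<in> cells C (cmp C d0 z) (cmp C d0 z') \<Longrightarrow> t \<in> cells C (cmp C d1 z) (cmp C d1 z') \<Longrightarrow>
       vcmp C (rwh C l z') s = vcmp C t (rwh C l z) \<Longrightarrow>
       \<exists>!r. r \<in> cells C z z' \<and> lwh C d0 r = s \<and> lwh C d1 r = t"
  unfolding is_arrow_object_def by blast

lemma arr_basic: assumes "is_arrow_object C A P d0 d1 l"
  shows "d0 \<in> hom C P A" "d1 \<in> hom C P A" "l \<in> cells C d0 d1" "P \<in> Ob C"
  using assms unfolding is_arrow_object_def by - (elim conjE, assumption)+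

lemma arr_fac: assumes "is_arrow_object C A P d0 d1 l" "g \<in> cells C x y" "x \<in> hom C Y A"
  obtains z where "z \<in> hom C Y P" "cmp C d0 z = x" "cmp C d1 z = y" "rwh C l z = g"
proof -
  have "y \<in> hom C Y A" using cells_par assms(2,3) by blast
  from arU1[OF assms(1) hom_ob(1)[OF assms(3)] assms(3) this assms(2)] show ?thesis using that by blast
qed

lemma arr_cancel: assumes "is_arrow_object C A P d0 d1 l" "z \<in> hom C Y P" "z' \<in> hom C Y P"
   "cmp C d0 z = cmp C d0 z'" "cmp C d1 z = cmp C d1 z'" "rwh C l z = rwh C l z'"
  shows "z = z'"
proof -
  note b = arr_basic[OF assms(1)]
  have 1: "cmp C d0 z \<in> hom C Y A" "cmp C d1 z \<in> hom C Y A" using cmp_hom[OF assms(2)] b by blast+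
  have 2: "rwh C l z \<in> cells C (cmp C d0 z) (cmp C d1 z)" using rwh_cells[OF b(3) b(1) assms(2)] .
  from arU1[OF assms(1) hom_ob(1)[OF assms(2)] 1 2] show ?thesis by (rule ex1_uniq) (use assms in simp_all)
qed

lemma arr_fac2: assumes "is_arrow_object C A P d0 d1 l" "z \<in> hom C Y P" "z' \<in> hom C Y P"
   "s \<in> cells C (cmp C d0 z) (cmp C d0 z')" "t \<in> cells C (cmp C d1 z) (cmp C d1 z')"
   "vcmp C (rwh C l z') s = vcmp C t (rwh C l z)"
  obtains r where "r \<in> cells C z z'" "lwh C d0 r = s" "lwh C d1 r = t"
  using arU2[OF assms(1) hom_ob(1)[OF assms(2)] assms(2-6)] that by blast

lemma arr_cancel2: assumes "is_arrow_object C A P d0 d1 l"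
   "z \<in> hom C Y P" "r \<in> cells C z z'" "r' \<in> cells C z z'" "lwh C d0 r = lwh C d0 r'" "lwh C d1 r = lwh C d1 r'"
  shows "r = r'"
proof -
  note b = arr_basic[OF assms(1)]
  have z': "z' \<in> hom C Y P" using cells_par assms(2,3) by blast
  have 1: "lwh C d0 r \<in> cells C (cmp C d0 z) (cmp C d0 z')" "lwh C d1 r \<in> cells C (cmp C d1 z) (cmp C d1 z')"
    using lwh_cells[OF assms(3,2)] b by blast+
  have 2: "vcmp C (rwh C l z') (lwh C d0 r) = vcmp C (lwh C d1 r) (rwh C l z)"
    using naturality[OF b(3) b(1) assms(3) assms(2)] .
  from arU2[OF assms(1) hom_ob(1)[OF assms(2)] assms(2) z' 1 2] show ?thesis by (rule ex1_uniq) (use assms in simp_all)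
qed

end


context tc begin

lemma coU1: "is_coequifier C a b Q e \<Longrightarrow> Y \<in> Ob C \<Longrightarrow> g \<in> hom C (cod1 C (src2 C a)) Y \<Longrightarrow> lwh C g a = lwh C g b \<Longrightarrow>
       \<exists>!h. h \<in> hom C Q Y \<and> cmp C h e = g"
  unfolding is_coequifier_def by blast
lemma coU2: "is_coequifier C a b Q e \<Longrightarrow> Y \<in> Ob C \<Longrightarrow> h \<in> hom C Q Y \<Longrightarrow> h' \<in> hom C Q Y \<Longrightarrow>
       t \<in> cells C (cmp C h e) (cmp C h' e) \<Longrightarrow> \<exists>!p. p \<in> cells C h h' \<and> rwh C p e = t"
  unfolding is_coequifier_def by blast
lemma co_basic: assumes "is_coequifier C a b Q e"
  shows "Q \<in> Ob C" "e \<in> hom C (cod1 C (src2 C a)) Q" "lwh C e a = lwh C e b"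
  using assms unfolding is_coequifier_def by - (elim conjE, assumption)+

lemma iso_inv: assumes "iso1 C x" "x \<in> hom C A B"
  obtains xi where "xi \<in> hom C B A" "cmp C xi x = idm C A" "cmp C x xi = idm C B"
  using assms homD[OF assms(2)] unfolding iso1_def by blast

lemma idm_iso: "A \<in> Ob C \<Longrightarrow> iso1 C (idm C A)"
  unfolding iso1_def using idm_hom[of A] cmp_idl[OF idm_hom[of A]] homD[OF idm_hom[of A]] by auto

lemma coeq_transfer:
  assumes co: "is_coequifier C a b Q e" and a: "a \<in> cells C u v" and b: "b \<in> cells C u v"
    and u: "u \<in> hom C X2 X1" and e: "e \<in> hom C X1 Q"
    and x: "x \<in> hom C A X1" and xi: "xi \<in> hom C X1 A" and xx1: "cmp C xi x = idm C A" and xx2: "cmp C x xi = idm C X1"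
    and y: "y \<in> hom C B Q" and yi: "yi \<in> hom C Q B" and yy1: "cmp C yi y = idm C B" and yy2: "cmp C y yi = idm C Q"
    and f: "f \<in> hom C A B" and sq: "cmp C e x = cmp C y f"
  shows "is_coequifier C (lwh C xi a) (lwh C xi b) B f"
proof -
  have v: "v \<in> hom C X2 X1" using cells_par a u by blast
  have a2: "lwh C xi a \<in> cells C (cmp C xi u) (cmp C xi v)" using lwh_cells[OF a u xi] .
  have b2: "lwh C xi b \<in> cells C (cmp C xi u) (cmp C xi v)" using lwh_cells[OF b u xi] .
  have xiu: "cmp C xi u \<in> hom C X2 A" using cmp_hom[OF u xi] .
  have B: "B \<in> Ob C" using hom_ob[OF f] by simp
  have srca: "cod1 C (src2 C a) = X1" using cellsD(2)[OF a] homD(3)[OF u] by simp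
  have fxi: "cmp C f xi = cmp C yi e"
  proof -
    have "cmp C yi e = cmp C yi (cmp C e (cmp C x xi))" using xx2 cmp_idr[OF e] by simp
    also have "\<dots> = cmp C yi (cmp C (cmp C e x) xi)" using cmp_assoc[OF xi x e] by simp
    also have "\<dots> = cmp C yi (cmp C y (cmp C f xi))" using sq cmp_assoc[OF xi f y] by simp
    also have "\<dots> = cmp C (cmp C yi y) (cmp C f xi)" using cmp_assoc[OF cmp_hom[OF xi f] y yi] by simp
    also have "\<dots> = cmp C f xi" using yy1 cmp_idl[OF cmp_hom[OF xi f]] by simp
    finally show ?thesis by simp
  qed
  have coe: "lwh C e a = lwh C e b" using co_basic(3)[OF co] .
  have wh: "lwh C g (lwh C xi c) = lwh C (cmp C g xi) c" if "c \<in> cells C u v" "g \<in> hom C A Y" for c g Y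
    using lwh_lwh[OF that(1) u xi that(2)] .
  have fa: "lwh C f (lwh C xi a) = lwh C f (lwh C xi b)"
  proof -
    have "lwh C f (lwh C xi a) = lwh C yi (lwh C e a)"
      using wh[OF a f] fxi lwh_lwh[OF a u e yi] by simp
    moreover have "lwh C f (lwh C xi b) = lwh C yi (lwh C e b)"
      using wh[OF b f] fxi lwh_lwh[OF b u e yi] by simp
    ultimately show ?thesis using coe by simp
  qed
  have U1: "\<exists>!h. h \<in> hom C B Y \<and> cmp C h f = g"
    if Y: "Y \<in> Ob C" and g: "g \<in> hom C (cod1 C (src2 C (lwh C xi a))) Y"
       and gg: "lwh C g (lwh C xi a) = lwh C g (lwh C xi b)" for Y g
  proof -
    have g: "g \<in> hom C A Y" using g cellsD(2)[OF a2] homD(3)[OF xiu] by simp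
    have gxi: "cmp C g xi \<in> hom C (cod1 C (src2 C a)) Y" using cmp_hom[OF xi g] srca by simp
    have cq: "lwh C (cmp C g xi) a = lwh C (cmp C g xi) b" using gg wh[OF a g] wh[OF b g] by simp
    obtain h' where h': "h' \<in> hom C Q Y" "cmp C h' e = cmp C g xi" using coU1[OF co Y gxi cq] by blast
    have h: "cmp C h' y \<in> hom C B Y" using cmp_hom[OF y h'(1)] .
    have hf: "cmp C (cmp C h' y) f = g"
    proof -
      have "cmp C (cmp C h' y) f = cmp C h' (cmp C e x)" using cmp_assoc[OF f y h'(1)] sq by simp
      also have "\<dots> = cmp C (cmp C g xi) x" using cmp_assoc[OF x e h'(1)] h'(2) by simp
      also have "\<dots> = g" using cmp_assoc[OF x xi g] xx1 cmp_idr[OF g] by simp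
      finally show ?thesis .
    qed
    have uniq: "h1 = h2" if h1: "h1 \<in> hom C B Y" "cmp C h1 f = g" and h2: "h2 \<in> hom C B Y" "cmp C h2 f = g" for h1 h2
    proof -
      have k: "cmp C (cmp C hh yi) e = cmp C g xi" if "hh \<in> hom C B Y" "cmp C hh f = g" for hh
        using cmp_assoc[OF e yi that(1)] fxi cmp_assoc[OF xi f that(1)] that(2) by simp
      have "cmp C h1 yi = cmp C h2 yi"
        by (rule ex1_uniq[OF coU1[OF co Y gxi cq]]) (use k[OF h1] k[OF h2] cmp_hom[OF yi h1(1)] cmp_hom[OF yi h2(1)] in auto)
      hence "cmp C (cmp C h1 yi) y = cmp C (cmp C h2 yi) y" by simp
      thus ?thesis using cmp_assoc[OF y yi h1(1)] cmp_assoc[OF y yi h2(1)] yy1 cmp_idr[OF h1(1)] cmp_idr[OF h2(1)] by simp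
    qed
    show ?thesis using h hf uniq by blast
  qed
  have U2: "\<exists>!p. p \<in> cells C h h' \<and> rwh C p f = t"
    if Y: "Y \<in> Ob C" and h: "h \<in> hom C B Y" and h': "h' \<in> hom C B Y" and t: "t \<in> cells C (cmp C h f) (cmp C h' f)"
    for Y h h' t
  proof -
    have hf: "cmp C h f \<in> hom C A Y" using cmp_hom[OF f h] .
    have hyi: "cmp C h yi \<in> hom C Q Y" "cmp C h' yi \<in> hom C Q Y" using cmp_hom[OF yi] h h' by blast+
    have eqk: "cmp C (cmp C k f) xi = cmp C (cmp C k yi) e" if "k \<in> hom C B Y" for k
      using cmp_assoc[OF xi f that] cmp_assoc[OF e yi that] fxi by simp
    define t' where "t' = rwh C t xi"
    have t': "t' \<in> cells C (cmp C (cmp C h yi) e) (cmp C (cmp C h' yi) e)"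
      using rwh_cells[OF t hf xi] eqk[OF h] eqk[OF h'] unfolding t'_def by simp
    note U = coU2[OF co Y hyi t']
    obtain p' where p': "p' \<in> cells C (cmp C h yi) (cmp C h' yi)" "rwh C p' e = t'" using U by blast
    have p: "rwh C p' y \<in> cells C h h'"
      using rwh_cells[OF p' (1) hyi(1) y] cmp_assoc[OF y yi h] cmp_assoc[OF y yi h'] yy1 cmp_idr[OF h] cmp_idr[OF h'] by simp
    have pf: "rwh C (rwh C p' y) f = t"
    proof -
      have "rwh C (rwh C p' y) f = rwh C p' (cmp C e x)" using rwh_rwh[OF p'(1) hyi(1) y f] sq by simp
      also have "\<dots> = rwh C t' x" using rwh_rwh[OF p'(1) hyi(1) e x] p'(2) by simp
      also have "\<dots> = t" unfolding t'_def using rwh_rwh[OF t hf xi x] xx1 rwh_idm[OF t hf] by simp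
      finally show ?thesis .
    qed
    have uniq: "p1 = p2" if p1: "p1 \<in> cells C h h'" "rwh C p1 f = t" and p2: "p2 \<in> cells C h h'" "rwh C p2 f = t" for p1 p2
    proof -
      have k: "rwh C pp yi \<in> cells C (cmp C h yi) (cmp C h' yi) \<and> rwh C (rwh C pp yi) e = t'"
        if "pp \<in> cells C h h'" "rwh C pp f = t" for pp
        using rwh_cells[OF that(1) h yi] rwh_rwh[OF that(1) h yi e] fxi[symmetric] rwh_rwh[OF that(1) h f xi] that(2)
        unfolding t'_def by simp
      have "rwh C p1 yi = rwh C p2 yi" by (rule ex1_uniq[OF U]) (use k[OF p1] k[OF p2] in auto)
      hence "rwh C (rwh C p1 yi) y = rwh C (rwh C p2 yi) y" by simp
      thus ?thesis using rwh_rwh[OF p1(1) h yi y] rwh_rwh[OF p2(1) h yi y] yy1 rwh_idm[OF p1(1) h] rwh_idm[OF p2(1) h] by simp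
    qed
    show ?thesis using p pf uniq by blast
  qed
  show ?thesis unfolding is_coequifier_def
    using cellsD[OF a2] cellsD[OF b2] B f homD(3)[OF xiu] fa U1 U2 by auto
qed

lemma coeq_restrict:
  assumes co: "is_coequifier C a2 b2 B f" and a2: "a2 \<in> cells C w w'"
    and al: "\<alpha> \<in> cells C ku kv" and be: "\<beta> \<in> cells C ku kv" and ku: "ku \<in> hom C E A"
    and z: "z \<in> hom C X2 E" and az: "rwh C \<alpha> z = a2" and bz: "rwh C \<beta> z = b2"
    and fab: "lwh C f \<alpha> = lwh C f \<beta>"
  shows "is_coequifier C \<alpha> \<beta> B f"
proof -
  have s1: "cod1 C (src2 C a2) = A" using cellsD(2)[OF rwh_cells[OF al ku z]] az cmp_hom[OF z ku] homD(3) by metis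
  have s2: "cod1 C (src2 C \<alpha>) = A" using cellsD(2)[OF al] homD(3)[OF ku] by simp
  have U1: "\<exists>!h. h \<in> hom C B Y \<and> cmp C h f = g"
    if Y: "Y \<in> Ob C" and g: "g \<in> hom C (cod1 C (src2 C \<alpha>)) Y" and gg: "lwh C g \<alpha> = lwh C g \<beta>" for Y g
  proof -
    have g': "g \<in> hom C A Y" using g s2 by simp
    have "lwh C g a2 = lwh C g b2"
      using lwh_rwh[OF al ku z g'] lwh_rwh[OF be ku z g'] gg az bz by simp
    thus ?thesis using coU1[OF co Y] g s1 s2 by simp
  qed
  have U2: "\<exists>!p. p \<in> cells C h h' \<and> rwh C p f = t"
    if "Y \<in> Ob C" "h \<in> hom C B Y" "h' \<in> hom C B Y" "t \<in> cells C (cmp C h f) (cmp C h' f)" for Y h h' t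
    using coU2[OF co that] .
  show ?thesis unfolding is_coequifier_def
    using cellsD[OF al] cellsD[OF be] co_basic[OF co] s1 s2 fab U1 U2 by auto
qed

end


context tc begin

lemma cmpM: assumes "f \<in> Mor C" "g \<in> Mor C" "cod1 C f = dom1 C g"
  shows "cmp C g f \<in> Mor C" "dom1 C (cmp C g f) = dom1 C f" "cod1 C (cmp C g f) = cod1 C g"
  using cmp_hom[OF homI[OF assms(1)], of g "cod1 C g"] homI[OF assms(2)] assms(3) by (auto simp: hom_def)

lemma assocM: assumes "f \<in> Mor C" "g \<in> Mor C" "h \<in> Mor C" "cod1 C f = dom1 C g" "cod1 C g = dom1 C h"
  shows "cmp C (cmp C h g) f = cmp C h (cmp C g f)"
  using cmp_assoc[OF homI[OF assms(1)], of g "cod1 C g" h "cod1 C h"] homI[OF assms(2)] homI[OF assms(3)] assms(4,5)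
  by simp

lemma CellM: assumes "s \<in> Cell C"
  shows "src2 C s \<in> Mor C" "tgt2 C s \<in> Mor C" "dom1 C (tgt2 C s) = dom1 C (src2 C s)" "cod1 C (tgt2 C s) = cod1 C (src2 C s)"
  using assms tc unfolding two_category_def by auto

lemma cellsI': "s \<in> Cell C \<Longrightarrow> s \<in> cells C (src2 C s) (tgt2 C s)" by (simp add: cells_def)

lemma lwhM: assumes "s \<in> Cell C" "h \<in> Mor C" "cod1 C (src2 C s) = dom1 C h"
  shows "lwh C h s \<in> Cell C" "src2 C (lwh C h s) = cmp C h (src2 C s)" "tgt2 C (lwh C h s) = cmp C h (tgt2 C s)"
proof -
  have "lwh C h s \<in> cells C (cmp C h (src2 C s)) (cmp C h (tgt2 C s))"
    by (rule lwh_cells[OF cellsI'[OF assms(1)] homI[OF CellM(1)[OF assms(1)]]]) (use homI[OF assms(2)] assms(3) in simp)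
  thus "lwh C h s \<in> Cell C" "src2 C (lwh C h s) = cmp C h (src2 C s)" "tgt2 C (lwh C h s) = cmp C h (tgt2 C s)"
    by (auto simp: cells_def)
qed

lemma rwhM: assumes "s \<in> Cell C" "z \<in> Mor C" "cod1 C z = dom1 C (src2 C s)"
  shows "rwh C s z \<in> Cell C" "src2 C (rwh C s z) = cmp C (src2 C s) z" "tgt2 C (rwh C s z) = cmp C (tgt2 C s) z"
proof -
  have "rwh C s z \<in> cells C (cmp C (src2 C s) z) (cmp C (tgt2 C s) z)"
    by (rule rwh_cells[OF cellsI'[OF assms(1)] homI[OF CellM(1)[OF assms(1)]]]) (use homI[OF assms(2)] assms(3) in simp)
  thus "rwh C s z \<in> Cell C" "src2 C (rwh C s z) = cmp C (src2 C s) z" "tgt2 C (rwh C s z) = cmp C (tgt2 C s) z"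
    by (auto simp: cells_def)
qed

lemma lwh_cmpM: assumes "s \<in> Cell C" "h \<in> Mor C" "g \<in> Mor C" "cod1 C (src2 C s) = dom1 C h" "cod1 C h = dom1 C g"
  shows "lwh C (cmp C g h) s = lwh C g (lwh C h s)"
proof -
  have "h \<in> hom C (cod1 C (src2 C s)) (cod1 C h)" "g \<in> hom C (cod1 C h) (cod1 C g)" using assms by (auto simp: hom_def)
  from lwh_lwh[OF cellsI'[OF assms(1)] homI[OF CellM(1)[OF assms(1)]] this] show ?thesis by simp
qed

lemma rwh_rwhM: assumes "s \<in> Cell C" "z \<in> Mor C" "z' \<in> Mor C" "cod1 C z = dom1 C (src2 C s)" "cod1 C z' = dom1 C z"
  shows "rwh C (rwh C s z) z' = rwh C s (cmp C z z')"
proof -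
  have "z \<in> hom C (dom1 C z) (dom1 C (src2 C s))" "z' \<in> hom C (dom1 C z') (dom1 C z)" using assms by (auto simp: hom_def)
  from rwh_rwh[OF cellsI'[OF assms(1)] homI[OF CellM(1)[OF assms(1)]] this] show ?thesis by simp
qed

lemma rwh_lwhM: assumes "s \<in> Cell C" "h \<in> Mor C" "z \<in> Mor C" "cod1 C (src2 C s) = dom1 C h" "cod1 C z = dom1 C (src2 C s)"
  shows "rwh C (lwh C h s) z = lwh C h (rwh C s z)"
proof -
  have "z \<in> hom C (dom1 C z) (dom1 C (src2 C s))" "h \<in> hom C (cod1 C (src2 C s)) (cod1 C h)" using assms by (auto simp: hom_def)
  from lwh_rwh[OF cellsI'[OF assms(1)] homI[OF CellM(1)[OF assms(1)]] this] show ?thesis by simp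
qed

lemmas morS = cmpM assocM CellM lwhM rwhM lwh_cmpM rwh_rwhM rwh_lwhM

lemma ext1: assumes "a \<in> Mor C" "b \<in> Mor C" "X \<in> Mor C" "cod1 C b = dom1 C a" "cod1 C X = dom1 C b" "cmp C a b = c"
  shows "cmp C a (cmp C b X) = cmp C c X"
  using assocM[OF assms(3,2,1,5,4)] assms(6) by simp

lemma extL: assumes "a \<in> Mor C" "b \<in> Mor C" "R \<in> Cell C" "cod1 C b = dom1 C a" "cod1 C (src2 C R) = dom1 C b" "cmp C a b = c"
  shows "lwh C a (lwh C b R) = lwh C c R"
  using lwh_cmpM[OF assms(3,2,1,5,4)] assms(6) by simp

lemma extR: assumes "s \<in> Cell C" "b \<in> Mor C" "X \<in> Mor C" "cod1 C b = dom1 C (src2 C s)" "cod1 C X = dom1 C b" "rwh C s b = c"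
  shows "rwh C s (cmp C b X) = rwh C c X"
  using rwh_rwhM[OF assms(1,2,3,4,5)] assms(6) by simp

end


context tc begin

lemma fcE: assumes "finitely_complete C"
  shows "\<And>A. A \<in> Ob C \<Longrightarrow> \<exists>P d0 d1 l. is_arrow_object C A P d0 d1 l"
    and "\<And>A B. A \<in> Ob C \<Longrightarrow> B \<in> Ob C \<Longrightarrow> \<exists>P p q. is_product C A B P p q"
    and "\<And>f g. f \<in> Mor C \<Longrightarrow> g \<in> Mor C \<Longrightarrow> dom1 C f = dom1 C g \<Longrightarrow> cod1 C f = cod1 C g \<Longrightarrow> \<exists>E m. is_equalizer C f g E m"
  using assms unfolding finitely_complete_def by blast+

lemma eqE: assumes "finitely_complete C" "f \<in> hom C X Y" "g \<in> hom C X Y"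
  obtains E m where "is_equalizer C f g E m"
proof -
  have "f \<in> Mor C" "g \<in> Mor C" "dom1 C f = dom1 C g" "cod1 C f = cod1 C g" using assms(2,3) by (auto simp: hom_def)
  from fcE(3)[OF assms(1) this] show ?thesis using that by blast
qed

lemma kernel_exists:
  assumes fc: "finitely_complete C" and f: "f \<in> hom C A B"
  shows "\<exists>E u v a b. is_bof_kernel C f E u v a b"
proof -
  have A: "A \<in> Ob C" "B \<in> Ob C" using hom_ob[OF f] by auto
  obtain P d0 d1 l where arA: "is_arrow_object C A P d0 d1 l" using fcE(1)[OF fc A(1)] by blast
  obtain PB D0 D1 L where arB: "is_arrow_object C B PB D0 D1 L" using fcE(1)[OF fc A(2)] by blast
  note aA = arr_basic[OF arA] and aB = arr_basic[OF arB]
  obtain Q p q where pr: "is_product C P P Q p q" using fcE(2)[OF fc aA(4) aA(4)] by blast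
  note pQ = prod_basic[OF pr]
  note at0 = homD[OF f] homD[OF aA(1)] homD[OF aA(2)] cellsD[OF aA(3)] homD[OF aB(1)] homD[OF aB(2)] cellsD[OF aB(3)]
     homD[OF pQ(1)] homD[OF pQ(2)]
  note S0 = at0 morS
  have h1: "cmp C d0 p \<in> hom C Q A" "cmp C d0 q \<in> hom C Q A" by (simp_all add: S0 hom_def)
  obtain E1 m1 where eq1: "is_equalizer C (cmp C d0 p) (cmp C d0 q) E1 m1" using eqE[OF fc h1] by blast
  note e1 = eq_basic[OF eq1 h1(1)]
  note at1 = at0 homD[OF e1(1)]
  have eq1b: "cmp C d0 (cmp C q m1) = cmp C d0 (cmp C p m1)" using e1(2) by (simp add: at1 morS)
  have eq1x: "cmp C d0 (cmp C q (cmp C m1 X)) = cmp C d0 (cmp C p (cmp C m1 X))"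
    if "X \<in> Mor C" "cod1 C X = E1" for X
  proof -
    have "cmp C (cmp C d0 (cmp C q m1)) X = cmp C (cmp C d0 (cmp C p m1)) X" using eq1b by simp
    thus ?thesis using that by (simp add: at1 morS)
  qed
  have eq1L: "lwh C d0 (lwh C q (lwh C m1 R)) = lwh C d0 (lwh C p (lwh C m1 R))"
    if "R \<in> Cell C" "cod1 C (src2 C R) = E1" for R
  proof -
    have "lwh C (cmp C d0 (cmp C q m1)) R = lwh C (cmp C d0 (cmp C p m1)) R" using eq1b by simp
    thus ?thesis using that by (simp add: at1 morS)
  qed
  note S1 = at1 morS eq1b eq1x eq1L
  have h2: "cmp C d1 (cmp C p m1) \<in> hom C E1 A" "cmp C d1 (cmp C q m1) \<in> hom C E1 A" by (simp_all add: S1 hom_def)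
  obtain E2 m2 where eq2: "is_equalizer C (cmp C d1 (cmp C p m1)) (cmp C d1 (cmp C q m1)) E2 m2" using eqE[OF fc h2] by blast
  note e2 = eq_basic[OF eq2 h2(1)]
  note at2 = at1 homD[OF e2(1)]
  have eq2b: "cmp C d1 (cmp C q (cmp C m1 m2)) = cmp C d1 (cmp C p (cmp C m1 m2))" using e2(2) by (simp add: at2 morS)
  have eq2x: "cmp C d1 (cmp C q (cmp C m1 (cmp C m2 X))) = cmp C d1 (cmp C p (cmp C m1 (cmp C m2 X)))"
    if "X \<in> Mor C" "cod1 C X = E2" for X
  proof -
    have "cmp C (cmp C d1 (cmp C q (cmp C m1 m2))) X = cmp C (cmp C d1 (cmp C p (cmp C m1 m2))) X" using eq2b by simp
    thus ?thesis using that by (simp add: at2 morS)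
  qed
  have eq2L: "lwh C d1 (lwh C q (lwh C m1 (lwh C m2 R))) = lwh C d1 (lwh C p (lwh C m1 (lwh C m2 R)))"
    if "R \<in> Cell C" "cod1 C (src2 C R) = E2" for R
  proof -
    have "lwh C (cmp C d1 (cmp C q (cmp C m1 m2))) R = lwh C (cmp C d1 (cmp C p (cmp C m1 m2))) R" using eq2b by simp
    thus ?thesis using that by (simp add: at2 morS)
  qed
  note S2 = S1 at2 eq2b eq2x eq2L
  have g1: "lwh C f (rwh C l (cmp C p (cmp C m1 m2))) \<in> cells C (cmp C f (cmp C d0 (cmp C p (cmp C m1 m2)))) (cmp C f (cmp C d1 (cmp C p (cmp C m1 m2))))"
    and x1: "cmp C f (cmp C d0 (cmp C p (cmp C m1 m2))) \<in> hom C E2 B"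
    by (simp_all add: S2 cells_def hom_def)
  obtain w1 where w1: "w1 \<in> hom C E2 PB" "cmp C D0 w1 = cmp C f (cmp C d0 (cmp C p (cmp C m1 m2)))"
     "cmp C D1 w1 = cmp C f (cmp C d1 (cmp C p (cmp C m1 m2)))" "rwh C L w1 = lwh C f (rwh C l (cmp C p (cmp C m1 m2)))"
    using arr_fac[OF arB g1 x1] by blast
  have g2: "lwh C f (rwh C l (cmp C q (cmp C m1 m2))) \<in> cells C (cmp C f (cmp C d0 (cmp C p (cmp C m1 m2)))) (cmp C f (cmp C d1 (cmp C p (cmp C m1 m2))))"
    by (simp_all add: S2 cells_def hom_def)
  obtain w2 where w2: "w2 \<in> hom C E2 PB" "cmp C D0 w2 = cmp C f (cmp C d0 (cmp C p (cmp C m1 m2)))"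
     "cmp C D1 w2 = cmp C f (cmp C d1 (cmp C p (cmp C m1 m2)))" "rwh C L w2 = lwh C f (rwh C l (cmp C q (cmp C m1 m2)))"
    using arr_fac[OF arB g2 x1] by blast
  obtain E m3 where eq3: "is_equalizer C w1 w2 E m3" using eqE[OF fc w1(1) w2(1)] by blast
  note e3 = eq_basic[OF eq3 w1(1)]
  note at3 = at2 homD[OF w1(1)] homD[OF w2(1)] homD[OF e3(1)]
  have wx: "cmp C D0 (cmp C w X) = cmp C f (cmp C d0 (cmp C p (cmp C m1 (cmp C m2 X))))"
           "cmp C D1 (cmp C w X) = cmp C f (cmp C d1 (cmp C p (cmp C m1 (cmp C m2 X))))"
    if "w = w1 \<or> w = w2" "X \<in> Mor C" "cod1 C X = E2" for w X
  proof -
    have "cmp C (cmp C D0 w) X = cmp C (cmp C f (cmp C d0 (cmp C p (cmp C m1 m2)))) X"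
         "cmp C (cmp C D1 w) X = cmp C (cmp C f (cmp C d1 (cmp C p (cmp C m1 m2)))) X"
      using that(1) w1 w2 by auto
    thus "cmp C D0 (cmp C w X) = cmp C f (cmp C d0 (cmp C p (cmp C m1 (cmp C m2 X))))"
           "cmp C D1 (cmp C w X) = cmp C f (cmp C d1 (cmp C p (cmp C m1 (cmp C m2 X))))"
      using that by (auto simp add: at3 morS)
  qed
  have wL: "lwh C D0 (lwh C w R) = lwh C f (lwh C d0 (lwh C p (lwh C m1 (lwh C m2 R))))"
           "lwh C D1 (lwh C w R) = lwh C f (lwh C d1 (lwh C p (lwh C m1 (lwh C m2 R))))"
    if "w = w1 \<or> w = w2" "R \<in> Cell C" "cod1 C (src2 C R) = E2" for w R
  proof -
    have "lwh C (cmp C D0 w) R = lwh C (cmp C f (cmp C d0 (cmp C p (cmp C m1 m2)))) R"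
         "lwh C (cmp C D1 w) R = lwh C (cmp C f (cmp C d1 (cmp C p (cmp C m1 m2)))) R"
      using that(1) w1 w2 by auto
    thus "lwh C D0 (lwh C w R) = lwh C f (lwh C d0 (lwh C p (lwh C m1 (lwh C m2 R))))"
           "lwh C D1 (lwh C w R) = lwh C f (lwh C d1 (lwh C p (lwh C m1 (lwh C m2 R))))"
      using that by (auto simp add: at3 morS)
  qed
  have w1R: "rwh C L (cmp C w1 X) = lwh C f (rwh C l (cmp C p (cmp C m1 (cmp C m2 X))))"
    if "X \<in> Mor C" "cod1 C X = E2" for X
  proof -
    have "rwh C (rwh C L w1) X = rwh C (lwh C f (rwh C l (cmp C p (cmp C m1 m2)))) X" using w1(4) by simp
    thus ?thesis using that by (simp add: at3 morS)
  qed
  have w2R: "rwh C L (cmp C w2 X) = lwh C f (rwh C l (cmp C q (cmp C m1 (cmp C m2 X))))"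
    if "X \<in> Mor C" "cod1 C X = E2" for X
  proof -
    have "rwh C (rwh C L w2) X = rwh C (lwh C f (rwh C l (cmp C q (cmp C m1 m2)))) X" using w2(4) by simp
    thus ?thesis using that by (simp add: at3 morS)
  qed
  have eq3b: "cmp C w2 m3 = cmp C w1 m3" using e3(2) by simp
  have eq3x: "cmp C w2 (cmp C m3 X) = cmp C w1 (cmp C m3 X)" if "X \<in> Mor C" "cod1 C X = E" for X
  proof -
    have "cmp C (cmp C w2 m3) X = cmp C (cmp C w1 m3) X" using eq3b by simp
    thus ?thesis using that by (simp add: at3 morS)
  qed
  have fab: "lwh C f (rwh C l (cmp C p (cmp C m1 (cmp C m2 m3)))) = lwh C f (rwh C l (cmp C q (cmp C m1 (cmp C m2 m3))))"
  proof -
    have "rwh C L (cmp C w1 m3) = rwh C L (cmp C w2 m3)" using eq3b by simp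
    thus ?thesis using w1R[of m3] w2R[of m3] by (simp add: at3)
  qed
  note S3 = S2 at3 wx w1R w2R

  define u where "u = cmp C d0 (cmp C p (cmp C m1 (cmp C m2 m3)))"
  define v where "v = cmp C d1 (cmp C p (cmp C m1 (cmp C m2 m3)))"
  define \<alpha> where "\<alpha> = rwh C l (cmp C p (cmp C m1 (cmp C m2 m3)))"
  define \<beta> where "\<beta> = rwh C l (cmp C q (cmp C m1 (cmp C m2 m3)))"
  note S = S3 u_def v_def \<alpha>_def \<beta>_def
  have uh: "u \<in> hom C E (dom1 C f)" "v \<in> hom C E (dom1 C f)" by (simp_all add: S hom_def)
  have ac: "\<alpha> \<in> cells C u v" "\<beta> \<in> cells C u v" by (simp_all add: S cells_def)
  have fab': "lwh C f \<alpha> = lwh C f \<beta>" using fab by (simp add: \<alpha>_def \<beta>_def)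
  have inj1: "z = z'" if z: "z \<in> hom C Y E" "z' \<in> hom C Y E" and hs: "cmp C u z = cmp C u z'" "cmp C v z = cmp C v z'"
     "rwh C \<alpha> z = rwh C \<alpha> z'" "rwh C \<beta> z = rwh C \<beta> z'" for Y z z'
  proof -
    note Z = homD[OF z(1)] homD[OF z(2)]
    have k1: "cmp C p (cmp C m1 (cmp C m2 (cmp C m3 z))) = cmp C p (cmp C m1 (cmp C m2 (cmp C m3 z')))"
      by (rule arr_cancel[OF arA, where Y=Y]) (use hs in \<open>simp_all add: S Z hom_def\<close>)
    have k2: "cmp C q (cmp C m1 (cmp C m2 (cmp C m3 z))) = cmp C q (cmp C m1 (cmp C m2 (cmp C m3 z')))"
      by (rule arr_cancel[OF arA, where Y=Y]) (use hs in \<open>simp_all add: S Z hom_def\<close>)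
    have k3: "cmp C m1 (cmp C m2 (cmp C m3 z)) = cmp C m1 (cmp C m2 (cmp C m3 z'))"
      by (rule prod_cancel[OF pr, where Y=Y]) (use k1 k2 in \<open>simp_all add: S Z hom_def\<close>)
    have k4: "cmp C m2 (cmp C m3 z) = cmp C m2 (cmp C m3 z')"
      by (rule eq_cancel[OF eq1 h1, where Y=Y]) (use k3 in \<open>simp_all add: S Z hom_def\<close>)
    have k5: "cmp C m3 z = cmp C m3 z'"
      by (rule eq_cancel[OF eq2 h2, where Y=Y]) (use k4 in \<open>simp_all add: S Z hom_def\<close>)
    show "z = z'"
      by (rule eq_cancel[OF eq3 w1(1) w2(1), where Y=Y]) (use k5 in \<open>simp_all add: S Z hom_def\<close>)
  qed
  have U1: "\<forall>Y\<in>Ob C. \<forall>x\<in>hom C Y (dom1 C f). \<forall>y\<in>hom C Y (dom1 C f). \<forall>g\<in>cells C x y. \<forall>d\<in>cells C x y.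
       lwh C f g = lwh C f d \<longrightarrow>
       (\<exists>!z. z \<in> hom C Y E \<and> cmp C u z = x \<and> cmp C v z = y \<and> rwh C \<alpha> z = g \<and> rwh C \<beta> z = d)"
  proof (intro ballI impI)
    fix Y x y g d
    assume Y: "Y \<in> Ob C" and x: "x \<in> hom C Y (dom1 C f)" and y: "y \<in> hom C Y (dom1 C f)"
      and g: "g \<in> cells C x y" and d: "d \<in> cells C x y" and fg: "lwh C f g = lwh C f d"
    have x': "x \<in> hom C Y A" using x homD(2)[OF f] by simp
    obtain z1 where z1: "z1 \<in> hom C Y P" "cmp C d0 z1 = x" "cmp C d1 z1 = y" "rwh C l z1 = g"
      using arr_fac[OF arA g x'] by blast
    obtain z2 where z2: "z2 \<in> hom C Y P" "cmp C d0 z2 = x" "cmp C d1 z2 = y" "rwh C l z2 = d"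
      using arr_fac[OF arA d x'] by blast
    obtain zq where zq: "zq \<in> hom C Y Q" "cmp C p zq = z1" "cmp C q zq = z2"
      using prod_pair[OF pr z1(1) z2(1)] by blast
    note Z = homD[OF z1(1)] homD[OF z2(1)] homD[OF zq(1)] z1 z2 zq
    have "cmp C (cmp C d0 p) zq = cmp C (cmp C d0 q) zq" by (simp add: S Z)
    from eq_fac[OF eq1 h1(1) zq(1) this] obtain z4 where z4: "z4 \<in> hom C Y E1" "cmp C m1 z4 = zq" by blast
    note Z = Z homD[OF z4(1)] z4
    have "cmp C (cmp C d1 (cmp C p m1)) z4 = cmp C (cmp C d1 (cmp C q m1)) z4" by (simp add: S Z)
    from eq_fac[OF eq2 h2(1) z4(1) this] obtain z5 where z5: "z5 \<in> hom C Y E2" "cmp C m2 z5 = z4" by blast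
    note Z = Z homD[OF z5(1)] z5
    have "cmp C w1 z5 = cmp C w2 z5"
      by (rule arr_cancel[OF arB, where Y=Y]) (use fg in \<open>simp_all add: S Z hom_def\<close>)
    from eq_fac[OF eq3 w1(1) z5(1) this] obtain z where z: "z \<in> hom C Y E" "cmp C m3 z = z5" by blast
    note Z = Z homD[OF z(1)] z
    have zp: "z \<in> hom C Y E \<and> cmp C u z = x \<and> cmp C v z = y \<and> rwh C \<alpha> z = g \<and> rwh C \<beta> z = d"
      by (simp add: S Z hom_def)
    show "\<exists>!z. z \<in> hom C Y E \<and> cmp C u z = x \<and> cmp C v z = y \<and> rwh C \<alpha> z = g \<and> rwh C \<beta> z = d"
    proof (rule ex1I[of _ z])
      show "z \<in> hom C Y E \<and> cmp C u z = x \<and> cmp C v z = y \<and> rwh C \<alpha> z = g \<and> rwh C \<beta> z = d" by (rule zp)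
      fix z' assume "z' \<in> hom C Y E \<and> cmp C u z' = x \<and> cmp C v z' = y \<and> rwh C \<alpha> z' = g \<and> rwh C \<beta> z' = d"
      thus "z' = z" using inj1[of z' Y z] zp by auto
    qed
  qed
  have inj2: "r = r'" if z: "z \<in> hom C Y E" and r: "r \<in> cells C z z'" "r' \<in> cells C z z'"
     and hs: "lwh C u r = lwh C u r'" "lwh C v r = lwh C v r'" for Y z z' r r'
  proof -
    have z': "z' \<in> hom C Y E" using cells_par[OF r(1) z] .
    note Z = homD[OF z] homD[OF z'] cellsD[OF r(1)] cellsD[OF r(2)]
    have k1: "lwh C p (lwh C m1 (lwh C m2 (lwh C m3 r))) = lwh C p (lwh C m1 (lwh C m2 (lwh C m3 r')))"
      by (rule arr_cancel2[OF arA, where Y=Y and z="cmp C p (cmp C m1 (cmp C m2 (cmp C m3 z)))"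
            and z'="cmp C p (cmp C m1 (cmp C m2 (cmp C m3 z')))"])
         (use hs in \<open>simp_all add: S Z hom_def cells_def\<close>)
    have k2: "lwh C q (lwh C m1 (lwh C m2 (lwh C m3 r))) = lwh C q (lwh C m1 (lwh C m2 (lwh C m3 r')))"
      by (rule arr_cancel2[OF arA, where Y=Y and z="cmp C q (cmp C m1 (cmp C m2 (cmp C m3 z)))"
            and z'="cmp C q (cmp C m1 (cmp C m2 (cmp C m3 z')))"])
         (use hs in \<open>simp_all add: S Z hom_def cells_def\<close>)
    have k3: "lwh C m1 (lwh C m2 (lwh C m3 r)) = lwh C m1 (lwh C m2 (lwh C m3 r'))"
      by (rule prod_cancel2[OF pr, where Y=Y and z="cmp C m1 (cmp C m2 (cmp C m3 z))"
            and z'="cmp C m1 (cmp C m2 (cmp C m3 z'))"])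
         (use k1 k2 in \<open>simp_all add: S Z hom_def cells_def\<close>)
    have k4: "lwh C m2 (lwh C m3 r) = lwh C m2 (lwh C m3 r')"
      by (rule eq_cancel2[OF eq1 h1, where Y=Y and z="cmp C m2 (cmp C m3 z)" and z'="cmp C m2 (cmp C m3 z')"])
         (use k3 in \<open>simp_all add: S Z hom_def cells_def\<close>)
    have k5: "lwh C m3 r = lwh C m3 r'"
      by (rule eq_cancel2[OF eq2 h2, where Y=Y and z="cmp C m3 z" and z'="cmp C m3 z'"])
         (use k4 in \<open>simp_all add: S Z hom_def cells_def\<close>)
    show "r = r'"
      by (rule eq_cancel2[OF eq3 w1(1) w2(1), where Y=Y and z=z and z'=z'])
         (use k5 r z in \<open>simp_all\<close>)
  qed
  have U2: "\<forall>Y\<in>Ob C. \<forall>z\<in>hom C Y E. \<forall>z'\<in>hom C Y E.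
       \<forall>s\<in>cells C (cmp C u z) (cmp C u z'). \<forall>t\<in>cells C (cmp C v z) (cmp C v z').
       vcmp C (rwh C \<alpha> z') s = vcmp C t (rwh C \<alpha> z) \<and> vcmp C (rwh C \<beta> z') s = vcmp C t (rwh C \<beta> z) \<longrightarrow>
       (\<exists>!r. r \<in> cells C z z' \<and> lwh C u r = s \<and> lwh C v r = t)"
  proof (intro ballI impI)
    fix Y z z' s t
    assume Y: "Y \<in> Ob C" and z: "z \<in> hom C Y E" and z': "z' \<in> hom C Y E"
      and s: "s \<in> cells C (cmp C u z) (cmp C u z')" and t: "t \<in> cells C (cmp C v z) (cmp C v z')"
      and c: "vcmp C (rwh C \<alpha> z') s = vcmp C t (rwh C \<alpha> z) \<and> vcmp C (rwh C \<beta> z') s = vcmp C t (rwh C \<beta> z)"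
    note Z = homD[OF z] homD[OF z'] 
    have sc: "s \<in> Cell C" "src2 C s = cmp C d0 (cmp C p (cmp C m1 (cmp C m2 (cmp C m3 z))))"
       "tgt2 C s = cmp C d0 (cmp C p (cmp C m1 (cmp C m2 (cmp C m3 z'))))"
      using s by (simp_all add: S Z cells_def)
    have tc': "t \<in> Cell C" "src2 C t = cmp C d1 (cmp C p (cmp C m1 (cmp C m2 (cmp C m3 z))))"
       "tgt2 C t = cmp C d1 (cmp C p (cmp C m1 (cmp C m2 (cmp C m3 z'))))"
      using t by (simp_all add: S Z cells_def)
    have c1: "vcmp C (rwh C l (cmp C p (cmp C m1 (cmp C m2 (cmp C m3 z'))))) s = vcmp C t (rwh C l (cmp C p (cmp C m1 (cmp C m2 (cmp C m3 z)))))"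
      using c by (simp add: S Z)
    have c2: "vcmp C (rwh C l (cmp C q (cmp C m1 (cmp C m2 (cmp C m3 z'))))) s = vcmp C t (rwh C l (cmp C q (cmp C m1 (cmp C m2 (cmp C m3 z)))))"
      using c by (simp add: S Z)
    note Z = Z sc tc'
    obtain r1 where r1: "r1 \<in> cells C (cmp C p (cmp C m1 (cmp C m2 (cmp C m3 z)))) (cmp C p (cmp C m1 (cmp C m2 (cmp C m3 z'))))"
       "lwh C d0 r1 = s" "lwh C d1 r1 = t"
      by (rule arr_fac2[OF arA, where Y=Y, OF _ _ _ _ c1]) (simp_all add: S Z hom_def cells_def)
    obtain r2 where r2: "r2 \<in> cells C (cmp C q (cmp C m1 (cmp C m2 (cmp C m3 z)))) (cmp C q (cmp C m1 (cmp C m2 (cmp C m3 z'))))"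
       "lwh C d0 r2 = s" "lwh C d1 r2 = t"
      by (rule arr_fac2[OF arA, where Y=Y, OF _ _ _ _ c2]) (simp_all add: S Z hom_def cells_def)
    obtain r3 where r3: "r3 \<in> cells C (cmp C m1 (cmp C m2 (cmp C m3 z))) (cmp C m1 (cmp C m2 (cmp C m3 z')))"
       "lwh C p r3 = r1" "lwh C q r3 = r2"
      by (rule prod_pair2[OF pr, where Y=Y, OF _ _ r1(1) r2(1)]) (simp_all add: S Z hom_def)
    note Z = Z cellsD[OF r1(1)] cellsD[OF r2(1)] cellsD[OF r3(1)] r1(2,3) r2(2,3) r3(2,3)
    obtain r4 where r4: "r4 \<in> cells C (cmp C m2 (cmp C m3 z)) (cmp C m2 (cmp C m3 z'))" "lwh C m1 r4 = r3"
      by (rule eq_fac2[OF eq1, where Y=Y, OF _ _ r3(1)]) (simp_all add: S Z hom_def)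
    note Z = Z cellsD[OF r4(1)] r4(2)
    obtain r5 where r5: "r5 \<in> cells C (cmp C m3 z) (cmp C m3 z')" "lwh C m2 r5 = r4"
      by (rule eq_fac2[OF eq2, where Y=Y, OF _ _ r4(1)]) (simp_all add: S Z hom_def)
    note Z = Z cellsD[OF r5(1)] r5(2)
    have "lwh C w1 r5 = lwh C w2 r5"
      by (rule arr_cancel2[OF arB, where Y=Y and z="cmp C w1 (cmp C m3 z)" and z'="cmp C w1 (cmp C m3 z')"])
         (simp_all add: S Z hom_def cells_def eq3x wL)
    from eq_fac2[OF eq3 z z' r5(1) this] obtain r where r: "r \<in> cells C z z'" "lwh C m3 r = r5" by blast
    note Z = Z cellsD[OF r(1)] r(2)
    have rp: "r \<in> cells C z z' \<and> lwh C u r = s \<and> lwh C v r = t" using r(1) by (simp add: S Z)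
    show "\<exists>!r. r \<in> cells C z z' \<and> lwh C u r = s \<and> lwh C v r = t"
    proof (rule ex1I[of _ r])
      show "r \<in> cells C z z' \<and> lwh C u r = s \<and> lwh C v r = t" by (rule rp)
      fix r' assume "r' \<in> cells C z z' \<and> lwh C u r' = s \<and> lwh C v r' = t"
      thus "r' = r" using inj2[OF z, of r' z' r] rp by auto
    qed
  qed
  have "is_bof_kernel C f E u v \<alpha> \<beta>"
    unfolding is_bof_kernel_def
    using homD(1)[OF f] e3(3) uh ac fab' U1 U2 by (intro conjI)
  thus ?thesis by blast
qed

end


context tc begin
lemma kerU1: "is_bof_kernel C f E u v a b \<Longrightarrow> Y \<in> Ob C \<Longrightarrow> x \<in> hom C Y (dom1 C f) \<Longrightarrow> y \<in> hom C Y (dom1 C f) \<Longrightarrow>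
   g \<in> cells C x y \<Longrightarrow> d \<in> cells C x y \<Longrightarrow> lwh C f g = lwh C f d \<Longrightarrow>
   \<exists>!z. z \<in> hom C Y E \<and> cmp C u z = x \<and> cmp C v z = y \<and> rwh C a z = g \<and> rwh C b z = d"
  unfolding is_bof_kernel_def by blast
lemma ker_basic: assumes "is_bof_kernel C f E u v a b"
  shows "u \<in> hom C E (dom1 C f)" "a \<in> cells C u v" "b \<in> cells C u v" "lwh C f a = lwh C f b"
  using assms unfolding is_bof_kernel_def by - (elim conjE, assumption)+

lemma main:
  assumes fc: "finitely_complete C" and q: "bof_quotient_map C f"
  shows "effective_bof_quotient_map C f"
proof -
  have fM: "f \<in> Mor C" using q unfolding bof_quotient_map_def by blast
  obtain X2 X1 u v a b Q e where dg: "bof_diagram C X2 X1 u v a b" and co: "is_coequifier C a b Q e"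
    and ai: "arrow_iso C f e" using q unfolding bof_quotient_map_def by blast
  have u: "u \<in> hom C X2 X1" and a: "a \<in> cells C u v" and b: "b \<in> cells C u v"
    using dg unfolding bof_diagram_def by blast+
  have e: "e \<in> hom C X1 Q" using co_basic(2)[OF co] cellsD(2)[OF a] homD(3)[OF u] by simp
  define A where "A = dom1 C f"
  define B where "B = cod1 C f"
  have f: "f \<in> hom C A B" using fM unfolding A_def B_def hom_def by simp
  obtain x y where x: "x \<in> hom C A X1" and y: "y \<in> hom C B Q" and ix: "iso1 C x" and iy: "iso1 C y"
    and sq: "cmp C e x = cmp C y f"
    using ai homD(2,3)[OF e] unfolding arrow_iso_def A_def B_def by auto
  obtain xi where xi: "xi \<in> hom C X1 A" "cmp C xi x = idm C A" "cmp C x xi = idm C X1" using iso_inv[OF ix x] by blast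
  obtain yi where yi: "yi \<in> hom C Q B" "cmp C yi y = idm C B" "cmp C y yi = idm C Q" using iso_inv[OF iy y] by blast
  have co2: "is_coequifier C (lwh C xi a) (lwh C xi b) B f"
    by (rule coeq_transfer[OF co a b u e x xi(1,2,3) y yi(1,2,3) f sq])
  obtain E ku kv \<alpha> \<beta> where ker: "is_bof_kernel C f E ku kv \<alpha> \<beta>" using kernel_exists[OF fc f] by blast
  note kb = ker_basic[OF ker]
  have v: "v \<in> hom C X2 X1" using cells_par[OF a u] .
  have xu: "cmp C xi u \<in> hom C X2 (dom1 C f)" "cmp C xi v \<in> hom C X2 (dom1 C f)"
    using cmp_hom[OF u xi(1)] cmp_hom[OF v xi(1)] homD(2)[OF f] by simp_all
  obtain z where z: "z \<in> hom C X2 E" "rwh C \<alpha> z = lwh C xi a" "rwh C \<beta> z = lwh C xi b"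
    using kerU1[OF ker hom_ob(1)[OF u] xu lwh_cells[OF a u xi(1)] lwh_cells[OF b u xi(1)] co_basic(3)[OF co2]]
    by blast
  have ku: "ku \<in> hom C E A" using kb(1) homD(2)[OF f] by simp
  have co3: "is_coequifier C \<alpha> \<beta> B f"
    by (rule coeq_restrict[OF co2 lwh_cells[OF a u xi(1)] kb(2) kb(3) ku z(1) z(2) z(3) kb(4)])
  have B: "B \<in> Ob C" using hom_ob(2)[OF f] .
  have "idm C B \<in> hom C B (cod1 C f)" "cmp C (idm C B) f = f" "iso1 C (idm C B)"
    using idm_hom[OF B] cmp_idl[OF f] idm_iso[OF B] B_def by simp_all
  thus ?thesis unfolding effective_bof_quotient_map_def using fM ker co3 by blast
qed
end

theorem proposition5p12:
  fixes C :: "('o, 'm, 'c) two_cat"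
  assumes "two_category C"
    and "finitely_complete C"
    and "bof_quotient_map C f"
  shows "effective_bof_quotient_map C f"
proof -
  interpret tc C by (unfold_locales) (rule assms(1))
  show ?thesis by (rule main[OF assms(2) assms(3)])
qed

end
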